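(* Consider the parametric multistage setting of the context, and assume: (A1) the noises $\mathbf{W}_1,\dots,\mathbf{W}_T$ are independent and each has finite support; (A2) (i) $\Phi(p)<+\infty$ for some $p\in\mathcal{P}_{\mathrm{ad}}$; (ii) each $f_t$ is affine in $(x,u)$; (iii) for all $t$ and all $w\in\mathrm{Supp}(\mathbf{W}_{t+1})$, $L_t(\cdot,\cdot,w,\cdot)\in\Gamma_{\mathcal{K}}[\mathbb{X}\times\mathbb{U},\mathbb{P}]$; (iv) $K\in\Gamma[\mathbb{X},\mathbb{P}]$; (A4) there is a compact $\mathcal{P}\subset\mathbb{P}$ with $\mathrm{dom}\,L_t(x,u,w,\cdot)\subset\mathcal{P}$ for all $(x,u)$, all $t$ and all $w\in\mathrm{Supp}(\mathbf{W}_{t+1})$, and $\mathrm{dom}\,K(x,\cdot)\subset\mathcal{P}$ for all $x$. Suppose moreover that $\mathcal{P}_{\mathrm{ad}}$ is compact, let $(\mu_n)_{n\in\mathbb{N}}$ be a nonincreasing sequence of positive reals with $\mu_n\to0$, and let $\Phi^\star=\inf_{p\in\mathcal{P}_{\mathrm{ad}}}\Phi(p)$. Then $$\inf_{p\in\mathcal{P}_{\mathrm{ad}}}\widetilde{V}^{\mu_n}_0(x_0,p)\le\Phi^\star\ \text{ for all }n\in\mathbb{N},\qquad\text{and}\qquad\inf_{p\in\mathcal{P}_{\mathrm{ad}}}\widetilde{V}^{\mu_n}_0(x_0,p)\xrightarrow[n\to+\infty]{}\Phi^\star.$$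
   Context: Setting: $T\ge1$; $\mathbb{X}=\mathbb{R}^{n_x}$, $\mathbb{U}=\mathbb{R}^{n_u}$, $\mathbb{W}=\mathbb{R}^{n_w}$, $\mathbb{P}=\mathbb{R}^{n_p}$; $\mathbf{W}_1,\dots,\mathbf{W}_T$ are $\mathbb{W}$-valued random variables, $\mathrm{Supp}$ = set of values taken with positive probability; dynamics $f_t:\mathbb{X}\times\mathbb{U}\times\mathbb{W}\to\mathbb{X}$, stage costs $L_t:\mathbb{X}\times\mathbb{U}\times\mathbb{W}\times\mathbb{P}\to\,]-\infty,+\infty]$ ($t=0,\dots,T-1$), final cost $K:\mathbb{X}\times\mathbb{P}\to\,]-\infty,+\infty]$, initial state $x_0\in\mathbb{X}$, admissible parameter set $\mathcal{P}_{\mathrm{ad}}\subseteq\mathbb{P}$. $\Phi(p)=\inf\mathbb{E}[\sum_{t=0}^{T-1}L_t(\mathbf{X}_t,\mathbf{U}_t,\mathbf{W}_{t+1},p)+K(\mathbf{X}_T,p)]$ over controls $\mathbf{U}_t$ measurable w.r.t. $\sigma(\mathbf{W}_1,\dots,\mathbf{W}_t)$, with $\mathbf{X}_0=x_0$, $\mathbf{X}_{t+1}=f_t(\mathbf{X}_t,\mathbf{U}_t,\mathbf{W}_{t+1})$. Moreau envelopes: $L^\mu_t(x,u,w,p)=\inf_{p'\in\mathbb{P}}(L_t(x,u,w,p')+\frac{1}{2\mu}\|p-p'\|_2^2)$, $K^\mu(x,p)=\inf_{p'\in\mathbb{P}}(K(x,p')+\frac{1}{2\mu}\|p-p'\|_2^2)$.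 Lower smooth value functions: $\widetilde{V}^\mu_T=K^\mu$, $\widetilde{V}^\mu_t(x,p)=\inf_{u\in\mathbb{U}}\mathbb{E}[L^\mu_t(x,u,\mathbf{W}_{t+1},p)+\widetilde{V}^\mu_{t+1}(f_t(x,u,\mathbf{W}_{t+1}),p)]$. $\mathrm{dom}\,g=\{g<+\infty\}$. $\Gamma[\mathbb{Y},\mathbb{P}]$ = lsc convex functions $\mathbb{Y}\times\mathbb{P}\to\,]-\infty,+\infty]$; $\Gamma_{\mathcal{K}}[\mathbb{X}\times\mathbb{U},\mathbb{P}]$ = those $\gamma\in\Gamma[\mathbb{X}\times\mathbb{U},\mathbb{P}]$ with $\mathrm{dom}\,\gamma(x,\cdot,p)\subset\mathcal{K}_\gamma$ for all $(x,p)$, for some compact $\mathcal{K}_\gamma\subset\mathbb{U}$. *)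

theory Defs
  imports "HOL-Analysis.Analysis" "HOL-Probability.Probability"
begin

definition lsc_ereal :: "('a::topological_space \<Rightarrow> ereal) \<Rightarrow> bool" where
  "lsc_ereal g \<longleftrightarrow> (\<forall>z. g z \<le> Liminf (at z) g)"

definition convex_ereal :: "('a::real_vector \<Rightarrow> ereal) \<Rightarrow> bool" where
  "convex_ereal g \<longleftrightarrow> (\<forall>y z a. 0 < a \<and> a < 1 \<longrightarrow>
      g ((1 - a) *\<^sub>R y + a *\<^sub>R z) \<le> ereal (1 - a) * g y + ereal a * g z)"

definition Gamma :: "('y::euclidean_space \<Rightarrow> 'p::euclidean_space \<Rightarrow> ereal) \<Rightarrow> bool" where
  "Gamma g \<longleftrightarrow> (\<forall>y p. g y p \<noteq> -\<infinity>) \<and>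
     lsc_ereal (\<lambda>(y,p). g y p) \<and> convex_ereal (\<lambda>(y,p). g y p)"

definition Gamma_K :: "('x::euclidean_space \<times> 'u::euclidean_space \<Rightarrow> 'p::euclidean_space \<Rightarrow> ereal) \<Rightarrow> bool" where
  "Gamma_K g \<longleftrightarrow> Gamma g \<and>
     (\<exists>KK. compact KK \<and> (\<forall>x p. {u. g (x,u) p < \<infinity>} \<subseteq> KK))"

definition affine_map :: "('a::real_vector \<Rightarrow> 'b::real_vector) \<Rightarrow> bool" where
  "affine_map h \<longleftrightarrow> (\<exists>l c. linear l \<and> (\<forall>z. h z = l z + c))"

definition moreau :: "real \<Rightarrow> ('p::euclidean_space \<Rightarrow> ereal) \<Rightarrow> 'p \<Rightarrow> ereal" where
  "moreau \<mu> g p = (INF p'. g p' + ereal ((norm (p - p'))\<^sup>2 / (2 * \<mu>)))"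

definition Efin :: "'a pmf \<Rightarrow> ('a \<Rightarrow> ereal) \<Rightarrow> ereal" where
  "Efin q g = (\<Sum>w\<in>set_pmf q. ereal (pmf q w) * g w)"

text \<open>Joint law of (W_1,...,W_t) for independent noises with laws Wd 1, ..., Wd t,
  as a list [w_1,...,w_t].\<close>
primrec hist :: "(nat \<Rightarrow> 'w pmf) \<Rightarrow> nat \<Rightarrow> 'w list pmf" where
  "hist Wd 0 = return_pmf []"
| "hist Wd (Suc t) = bind_pmf (hist Wd t) (\<lambda>h. map_pmf (\<lambda>w. h @ [w]) (Wd (Suc t)))"

text \<open>State trajectory: X_0 = x0, X_(t+1) = f_t(X_t, U_t, W_(t+1)) with U_t = pol t (w_1..w_t),
  where h = [w_1,...,w_T] and h ! t = w_(t+1).\<close>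
primrec traj :: "(nat \<Rightarrow> 'x \<Rightarrow> 'u \<Rightarrow> 'w \<Rightarrow> 'x) \<Rightarrow> 'x \<Rightarrow> (nat \<Rightarrow> 'w list \<Rightarrow> 'u)
                  \<Rightarrow> 'w list \<Rightarrow> nat \<Rightarrow> 'x" where
  "traj f x0 pol h 0 = x0"
| "traj f x0 pol h (Suc t) = f t (traj f x0 pol h t) (pol t (take t h)) (h ! t)"

text \<open>Value of the parametric multistage problem: infimum over nonanticipative policies
  (U_t a function of W_1..W_t) of the expected total cost.\<close>
definition Phi :: "nat \<Rightarrow> (nat \<Rightarrow> 'w pmf) \<Rightarrow> (nat \<Rightarrow> 'x \<Rightarrow> 'u \<Rightarrow> 'w \<Rightarrow> 'x)
     \<Rightarrow> (nat \<Rightarrow> 'x \<Rightarrow> 'u \<Rightarrow> 'w \<Rightarrow> 'p \<Rightarrow> ereal) \<Rightarrow> ('x \<Rightarrow> 'p \<Rightarrow> ereal) \<Rightarrow> 'x \<Rightarrow> 'p \<Rightarrow> ereal" where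
  "Phi T Wd f L K x0 p =
     (INF pol. Efin (hist Wd T) (\<lambda>h.
        (\<Sum>t<T. L t (traj f x0 pol h t) (pol t (take t h)) (h ! t) p) + K (traj f x0 pol h T) p))"

text \<open>Lower smooth value functions, indexed by the number n of remaining stages
  (time t = T - n).\<close>
primrec Vrem :: "nat \<Rightarrow> (nat \<Rightarrow> 'w pmf) \<Rightarrow> (nat \<Rightarrow> 'x \<Rightarrow> 'u \<Rightarrow> 'w \<Rightarrow> 'x)
     \<Rightarrow> (nat \<Rightarrow> 'x \<Rightarrow> 'u \<Rightarrow> 'w \<Rightarrow> 'p::euclidean_space \<Rightarrow> ereal) \<Rightarrow> ('x \<Rightarrow> 'p \<Rightarrow> ereal) \<Rightarrow> real
     \<Rightarrow> nat \<Rightarrow> 'x \<Rightarrow> 'p \<Rightarrow> ereal" where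
  "Vrem T Wd f L K \<mu> 0 x p = moreau \<mu> (K x) p"
| "Vrem T Wd f L K \<mu> (Suc n) x p =
     (let t = T - Suc n in
      INF u. Efin (Wd (Suc t)) (\<lambda>w. moreau \<mu> (L t x u w) p + Vrem T Wd f L K \<mu> n (f t x u w) p))"

definition Vlow :: "nat \<Rightarrow> (nat \<Rightarrow> 'w pmf) \<Rightarrow> (nat \<Rightarrow> 'x \<Rightarrow> 'u \<Rightarrow> 'w \<Rightarrow> 'x)
     \<Rightarrow> (nat \<Rightarrow> 'x \<Rightarrow> 'u \<Rightarrow> 'w \<Rightarrow> 'p::euclidean_space \<Rightarrow> ereal) \<Rightarrow> ('x \<Rightarrow> 'p \<Rightarrow> ereal) \<Rightarrow> real
     \<Rightarrow> nat \<Rightarrow> 'x \<Rightarrow> 'p \<Rightarrow> ereal" where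
  "Vlow T Wd f L K \<mu> t = Vrem T Wd f L K \<mu> (T - t)"

end

theory Submission
  imports Defs
begin

lemma sum_ereal_cmult:
  assumes "0 \<le> c"
  shows "ereal c * sum f A = (\<Sum>i\<in>A. ereal c * f i)"
proof (induct A rule: infinite_finite_induct)
  case (insert x F)
  then show ?case using assms by (simp add: ereal_pos_distrib)
qed simp_all

lemma Efin_superset:
  assumes "finite A" "set_pmf q \<subseteq> A"
  shows "Efin q g = (\<Sum>w\<in>A. ereal (pmf q w) * g w)"
  unfolding Efin_def
  by (rule sum.mono_neutral_left) (use assms in \<open>auto simp: set_pmf_iff\<close>)

lemma Efin_mono:
  assumes "\<And>w. w \<in> set_pmf q \<Longrightarrow> g w \<le> h w"
  shows "Efin q g \<le> Efin q h"
  unfolding Efin_def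
  by (rule sum_mono) (auto intro!: ereal_mult_left_mono assms)

lemma Efin_const_add:
  assumes "finite (set_pmf q)"
  shows "Efin q (\<lambda>w. c + g w) = c + Efin q g"
proof -
  have "Efin q (\<lambda>w. c + g w) = (\<Sum>w\<in>set_pmf q. ereal (pmf q w) * c + ereal (pmf q w) * g w)"
    unfolding Efin_def by (intro sum.cong refl) (simp add: ereal_pos_distrib)
  also have "\<dots> = (\<Sum>w\<in>set_pmf q. ereal (pmf q w) * c) + Efin q g"
    unfolding Efin_def by (simp add: sum.distrib)
  also have "(\<Sum>w\<in>set_pmf q. ereal (pmf q w) * c) = (\<Sum>w\<in>set_pmf q. ereal (pmf q w)) * c"
    by (rule sum_ereal_left_distrib[symmetric]) simp
  also have "(\<Sum>w\<in>set_pmf q. ereal (pmf q w)) = 1"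
    using sum_pmf_eq_1[OF assms order_refl] by (simp add: one_ereal_def)
  finally show ?thesis by simp
qed

lemma Efin_add_const:
  assumes "finite (set_pmf q)"
  shows "Efin q (\<lambda>w. g w + c) = Efin q g + c"
  using Efin_const_add[OF assms, of c g] by (simp add: add.commute)

lemma Efin_const:
  assumes "finite (set_pmf q)"
  shows "Efin q (\<lambda>w. c) = c"
  using Efin_const_add[OF assms, of c "\<lambda>_. 0"] by (simp add: Efin_def)

lemma Efin_infty:
  assumes "finite (set_pmf q)" "w \<in> set_pmf q" "g w = \<infinity>"
  shows "Efin q g = \<infinity>"
  unfolding Efin_def sum_Pinfty using assms pmf_positive[OF assms(2)]
  by (intro conjI bexI[of _ w]) auto

lemma Efin_lower:
  assumes "finite (set_pmf q)" "\<And>w. w \<in> set_pmf q \<Longrightarrow> c \<le> g w"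
  shows "c \<le> Efin q g"
  using Efin_mono[of q "\<lambda>_. c" g] Efin_const[OF assms(1)] assms(2) by simp

lemma Efin_map_inj:
  assumes "inj \<phi>"
  shows "Efin (map_pmf \<phi> q) g = Efin q (\<lambda>w. g (\<phi> w))"
  unfolding Efin_def set_map_pmf
  by (subst sum.reindex) (use assms in \<open>auto simp: inj_on_def pmf_map_inj'\<close>)

lemma Efin_bind:
  assumes fin: "finite (set_pmf M)" and finF: "\<And>y. y \<in> set_pmf M \<Longrightarrow> finite (set_pmf (F y))"
  shows "Efin (bind_pmf M F) g = Efin M (\<lambda>y. Efin (F y) g)"
proof -
  define Z where "Z = (\<Union>y\<in>set_pmf M. set_pmf (F y))"
  have Zfin: "finite Z" unfolding Z_def using fin finF by auto
  have pb: "pmf (bind_pmf M F) z = (\<Sum>y\<in>set_pmf M. pmf M y * pmf (F y) z)" for z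
    unfolding pmf_bind by (subst integral_measure_pmf[OF fin]) auto
  have "Efin (bind_pmf M F) g = (\<Sum>z\<in>Z. ereal (pmf (bind_pmf M F) z) * g z)"
    unfolding Efin_def Z_def by simp
  also have "\<dots> = (\<Sum>z\<in>Z. \<Sum>y\<in>set_pmf M. ereal (pmf M y) * (ereal (pmf (F y) z) * g z))"
    unfolding pb sum_ereal[symmetric]
    by (intro sum.cong refl, subst sum_ereal_left_distrib) (auto simp: mult.assoc[symmetric])
  also have "\<dots> = (\<Sum>y\<in>set_pmf M. \<Sum>z\<in>Z. ereal (pmf M y) * (ereal (pmf (F y) z) * g z))"
    by (rule sum.swap)
  also have "\<dots> = (\<Sum>y\<in>set_pmf M. ereal (pmf M y) * Efin (F y) g)"
    by (intro sum.cong refl, subst Efin_superset[OF Zfin], force simp: Z_def)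
       (simp add: sum_ereal_cmult)
  finally show ?thesis unfolding Efin_def .
qed

lemma hist_set:
  "h \<in> set_pmf (hist Wd t) \<Longrightarrow> length h = t \<and> (\<forall>s<t. h ! s \<in> set_pmf (Wd (Suc s)))"
proof (induct t arbitrary: h)
  case (Suc t)
  then obtain h0 w where "h = h0 @ [w]" "h0 \<in> set_pmf (hist Wd t)" "w \<in> set_pmf (Wd (Suc t))" by auto
  with Suc(1)[of h0] show ?case by (auto simp: nth_append less_Suc_eq)
qed simp

lemma hist_fin:
  assumes "\<And>s. s < t \<Longrightarrow> finite (set_pmf (Wd (Suc s)))"
  shows "finite (set_pmf (hist Wd t))"
  using assms by (induct t) auto

lemma Efin_hist_Suc:
  assumes "\<And>s. s < Suc t \<Longrightarrow> finite (set_pmf (Wd (Suc s)))"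
  shows "Efin (hist Wd (Suc t)) g = Efin (hist Wd t) (\<lambda>h. Efin (Wd (Suc t)) (\<lambda>w. g (h @ [w])))"
proof -
  have "Efin (hist Wd (Suc t)) g = Efin (hist Wd t) (\<lambda>h. Efin (map_pmf (\<lambda>w. h @ [w]) (Wd (Suc t))) g)"
    unfolding hist.simps using assms
    by (intro Efin_bind hist_fin) auto
  also have "\<dots> = Efin (hist Wd t) (\<lambda>h. Efin (Wd (Suc t)) (\<lambda>w. g (h @ [w])))"
    by (subst Efin_map_inj) (auto simp: inj_def)
  finally show ?thesis .
qed

lemma Efin_cong:
  "(\<And>w. w \<in> set_pmf q \<Longrightarrow> g w = h w) \<Longrightarrow> Efin q g = Efin q h"
  unfolding Efin_def by (auto intro!: sum.cong)

lemma Efin_return: "Efin (return_pmf a) g = g a"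
  by (simp add: Efin_def)

lemma traj_take_eq:
  "take s h = take s h' \<Longrightarrow> traj f x0 pol h s = traj f x0 pol h' s"
proof (induct s)
  case (Suc s)
  have "take s h = take s h'" using Suc(2) by (metis take_take min.absorb1 le_SucI order.refl)
  moreover have "h ! s = h' ! s" using Suc(2) by (metis lessI nth_take)
  ultimately show ?case using Suc(1) by simp
qed simp

lemma traj_snoc:
  "s \<le> length h \<Longrightarrow> traj f x0 pol (h @ [w]) s = traj f x0 pol h s"
  by (rule traj_take_eq) simp

primrec Qr :: "nat \<Rightarrow> (nat \<Rightarrow> 'w pmf) \<Rightarrow> (nat \<Rightarrow> 'x \<Rightarrow> 'u \<Rightarrow> 'w \<Rightarrow> 'x)
     \<Rightarrow> (nat \<Rightarrow> 'x \<Rightarrow> 'u \<Rightarrow> 'w \<Rightarrow> 'p \<Rightarrow> ereal) \<Rightarrow> ('x \<Rightarrow> 'p \<Rightarrow> ereal) \<Rightarrow> 'x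
     \<Rightarrow> (nat \<Rightarrow> 'w list \<Rightarrow> 'u) \<Rightarrow> 'p \<Rightarrow> nat \<Rightarrow> 'w list \<Rightarrow> ereal" where
  "Qr T Wd f L K x0 pol p 0 h = K (traj f x0 pol h T) p"
| "Qr T Wd f L K x0 pol p (Suc m) h = (let t = T - Suc m in
     Efin (Wd (Suc t)) (\<lambda>w. L t (traj f x0 pol h t) (pol t (take t h)) w p + Qr T Wd f L K x0 pol p m (h @ [w])))"

definition Scost where
  "Scost f L x0 pol p t h = (\<Sum>s<t. L s (traj f x0 pol h s) (pol s (take s h)) (h ! s) p)"

lemma Scost_snoc:
  assumes "length h = t"
  shows "Scost f L x0 pol p (Suc t) (h @ [w]) = Scost f L x0 pol p t h + L t (traj f x0 pol h t) (pol t (take t h)) w p"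
proof -
  have "Scost f L x0 pol p (Suc t) (h @ [w]) = Scost f L x0 pol p t (h @ [w]) + L t (traj f x0 pol h t) (pol t (take t h)) w p"
    unfolding Scost_def using assms by (simp add: traj_snoc nth_append)
  moreover have "Scost f L x0 pol p t (h @ [w]) = Scost f L x0 pol p t h"
    unfolding Scost_def using assms by (intro sum.cong refl) (simp add: traj_snoc nth_append)
  ultimately show ?thesis by simp
qed

lemma cost_decomp:
  assumes fin: "\<And>t. t < T \<Longrightarrow> finite (set_pmf (Wd (Suc t)))"
  shows "m \<le> T \<Longrightarrow> Efin (hist Wd T) (\<lambda>h. Scost f L x0 pol p T h + K (traj f x0 pol h T) p)
      = Efin (hist Wd (T - m)) (\<lambda>h. Scost f L x0 pol p (T - m) h + Qr T Wd f L K x0 pol p m h)"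
proof (induct m)
  case (Suc m)
  define t where "t = T - Suc m"
  have tm: "T - m = Suc t" using Suc(2) by (simp add: t_def)
  have "Efin (hist Wd (Suc t)) (\<lambda>h. Scost f L x0 pol p (Suc t) h + Qr T Wd f L K x0 pol p m h)
     = Efin (hist Wd t) (\<lambda>h. Efin (Wd (Suc t)) (\<lambda>w. Scost f L x0 pol p (Suc t) (h @ [w]) + Qr T Wd f L K x0 pol p m (h @ [w])))"
    by (rule Efin_hist_Suc) (use fin tm in auto)
  also have "\<dots> = Efin (hist Wd t) (\<lambda>h. Scost f L x0 pol p t h + Qr T Wd f L K x0 pol p (Suc m) h)"
  proof (rule Efin_cong)
    fix h assume h: "h \<in> set_pmf (hist Wd t)"
    then have lh: "length h = t" using hist_set by blast
    have "Efin (Wd (Suc t)) (\<lambda>w. Scost f L x0 pol p (Suc t) (h @ [w]) + Qr T Wd f L K x0 pol p m (h @ [w]))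
       = Efin (Wd (Suc t)) (\<lambda>w. Scost f L x0 pol p t h + (L t (traj f x0 pol h t) (pol t (take t h)) w p + Qr T Wd f L K x0 pol p m (h @ [w])))"
      by (intro Efin_cong) (simp only: Scost_snoc[OF lh] add.assoc)
    also have "\<dots> = Scost f L x0 pol p t h + Efin (Wd (Suc t)) (\<lambda>w. L t (traj f x0 pol h t) (pol t (take t h)) w p + Qr T Wd f L K x0 pol p m (h @ [w]))"
      by (rule Efin_const_add) (use fin Suc(2) in \<open>simp add: t_def\<close>)
    also have "Efin (Wd (Suc t)) (\<lambda>w. L t (traj f x0 pol h t) (pol t (take t h)) w p + Qr T Wd f L K x0 pol p m (h @ [w]))
        = Qr T Wd f L K x0 pol p (Suc m) h"
      by (simp only: Qr.simps Let_def t_def)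
    finally show "Efin (Wd (Suc t)) (\<lambda>w. Scost f L x0 pol p (Suc t) (h @ [w]) + Qr T Wd f L K x0 pol p m (h @ [w]))
       = Scost f L x0 pol p t h + Qr T Wd f L K x0 pol p (Suc m) h" .
  qed
  finally have "Efin (hist Wd (T - m)) (\<lambda>h. Scost f L x0 pol p (T - m) h + Qr T Wd f L K x0 pol p m h)
     = Efin (hist Wd (T - Suc m)) (\<lambda>h. Scost f L x0 pol p (T - Suc m) h + Qr T Wd f L K x0 pol p (Suc m) h)"
    by (simp only: tm t_def)
  with Suc(1) Suc(2) show ?case by simp
qed (simp add: Scost_def)

lemma cost_eq_Qr:
  assumes fin: "\<And>t. t < T \<Longrightarrow> finite (set_pmf (Wd (Suc t)))"
  shows "Efin (hist Wd T) (\<lambda>h. (\<Sum>t<T. L t (traj f x0 pol h t) (pol t (take t h)) (h ! t) p) + K (traj f x0 pol h T) p)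
      = Qr T Wd f L K x0 pol p T []"
  using cost_decomp[of T Wd T f L x0 pol p K, OF fin order.refl] by (simp add: Scost_def Efin_return)

primrec Gd :: "nat \<Rightarrow> (nat \<Rightarrow> 'w pmf) \<Rightarrow> (nat \<Rightarrow> 'x \<Rightarrow> 'u \<Rightarrow> 'w \<Rightarrow> 'x)
     \<Rightarrow> (nat \<Rightarrow> 'x \<Rightarrow> 'u \<Rightarrow> 'w \<Rightarrow> 'p \<Rightarrow> ereal) \<Rightarrow> ('x \<Rightarrow> 'p \<Rightarrow> ereal)
     \<Rightarrow> nat \<Rightarrow> 'x \<Rightarrow> 'p \<Rightarrow> ereal" where
  "Gd T Wd f l k 0 x p = k x p"
| "Gd T Wd f l k (Suc n) x p =
     (let t = T - Suc n in
      INF u. Efin (Wd (Suc t)) (\<lambda>w. l t x u w p + Gd T Wd f l k n (f t x u w) p))"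

lemma Vrem_Gd:
  "Vrem T Wd f L K \<mu> n x p = Gd T Wd f (\<lambda>t x u w. moreau \<mu> (L t x u w)) (\<lambda>x. moreau \<mu> (K x)) n x p"
  by (induct n arbitrary: x) (simp_all add: Let_def)

lemma moreau_le: "moreau \<mu> g p \<le> g p"
  unfolding moreau_def by (rule INF_lower2[of p]) simp_all

lemma Gd_mono:
  assumes "\<And>t x u w p. l t x u w p \<le> l' t x u w p" "\<And>x p. k x p \<le> k' x p"
  shows "Gd T Wd f l k n x p \<le> Gd T Wd f l' k' n x p"
proof (induct n arbitrary: x)
  case 0 then show ?case using assms by simp
next
  case (Suc n)
  show ?case unfolding Gd.simps Let_def
    by (intro INF_mono' Efin_mono add_mono assms Suc)
qed

lemma Gd_le_Qr:
  "m \<le> T \<Longrightarrow> length h = T - m \<Longrightarrow>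
   Gd T Wd f L K m (traj f x0 pol h (T - m)) p \<le> Qr T Wd f L K x0 pol p m h"
proof (induct m arbitrary: h)
  case 0 then show ?case by simp
next
  case (Suc m)
  define t where "t = T - Suc m"
  have tm: "T - m = Suc t" using Suc(2) by (simp add: t_def)
  have lh: "length h = t" using Suc(3) by (simp add: t_def)
  define x where "x = traj f x0 pol h t"
  define u where "u = pol t (take t h)"
  have tr: "traj f x0 pol (h @ [w]) (T - m) = f t x u w" for w
    using lh by (simp add: tm x_def u_def traj_snoc nth_append)
  have "Gd T Wd f L K (Suc m) x p \<le> Efin (Wd (Suc t)) (\<lambda>w. L t x u w p + Gd T Wd f L K m (f t x u w) p)"
    unfolding Gd.simps Let_def t_def[symmetric] by (rule INF_lower) simp
  also have "\<dots> \<le> Efin (Wd (Suc t)) (\<lambda>w. L t x u w p + Qr T Wd f L K x0 pol p m (h @ [w]))"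
    using Suc(1)[of "h @ [_]"] Suc(2) lh tm tr by (intro Efin_mono add_mono order.refl) auto
  also have "\<dots> = Qr T Wd f L K x0 pol p (Suc m) h"
    by (simp add: Let_def t_def[symmetric] x_def u_def)
  finally show ?case by (simp add: t_def[symmetric] x_def)
qed

lemma Gd_le_Phi:
  assumes fin: "\<And>t. t < T \<Longrightarrow> finite (set_pmf (Wd (Suc t)))"
  shows "Gd T Wd f L K T x0 p \<le> Phi T Wd f L K x0 p"
  unfolding Phi_def
proof (rule INF_greatest)
  fix pol
  have "Gd T Wd f L K T (traj f x0 pol [] (T - T)) p \<le> Qr T Wd f L K x0 pol p T []"
    by (rule Gd_le_Qr) simp_all
  then have "Gd T Wd f L K T x0 p \<le> Qr T Wd f L K x0 pol p T []" by simp
  then show "Gd T Wd f L K T x0 p \<le> Efin (hist Wd T) (\<lambda>h. (\<Sum>t<T. L t (traj f x0 pol h t) (pol t (take t h)) (h ! t) p) + K (traj f x0 pol h T) p)"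
    by (subst cost_eq_Qr[where T=T and Wd=Wd, OF fin])
qed

primrec fbtraj where
  "fbtraj f x0 \<phi> h 0 = x0"
| "fbtraj f x0 \<phi> h (Suc t) = f t (fbtraj f x0 \<phi> h t) (\<phi> t (fbtraj f x0 \<phi> h t)) (h ! t)"

lemma fbtraj_take_eq:
  "take s h = take s h' \<Longrightarrow> fbtraj f x0 \<phi> h s = fbtraj f x0 \<phi> h' s"
proof (induct s)
  case (Suc s)
  have "take s h = take s h'" using Suc(2) by (metis take_take min.absorb1 le_SucI order.refl)
  moreover have "h ! s = h' ! s" using Suc(2) by (metis lessI nth_take)
  ultimately show ?case using Suc(1) by simp
qed simp

lemma traj_fb:
  "traj f x0 (\<lambda>t h. \<phi> t (fbtraj f x0 \<phi> h t)) h t = fbtraj f x0 \<phi> h t"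
proof (induct t)
  case (Suc t)
  have "fbtraj f x0 \<phi> (take t h) t = fbtraj f x0 \<phi> h t" by (rule fbtraj_take_eq) simp
  then show ?case using Suc by simp
qed simp

lemma Phi_le_Gd:
  assumes fin: "\<And>t. t < T \<Longrightarrow> finite (set_pmf (Wd (Suc t)))"
    and nm: "\<And>n x. n \<le> T \<Longrightarrow> Gd T Wd f L K n x p \<noteq> -\<infinity>"
  shows "Phi T Wd f L K x0 p \<le> Gd T Wd f L K T x0 p"
proof (rule ereal_le_epsilon2)
  fix e :: real assume e: "0 < e"
  define \<epsilon> where "\<epsilon> = e / (real T + 1)"
  have \<epsilon>: "0 < \<epsilon>" using e by (simp add: \<epsilon>_def)
  define G where "G t x u = Efin (Wd (Suc t)) (\<lambda>w. L t x u w p + Gd T Wd f L K (T - Suc t) (f t x u w) p)" for t x u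
  have ex: "\<exists>u. G t x u \<le> Gd T Wd f L K (T - t) x p + ereal \<epsilon>" if "t < T" for t x
  proof -
    have eq: "Gd T Wd f L K (T - t) x p = (INF u. G t x u)"
    proof -
      have "T - t = Suc (T - Suc t)" "T - Suc (T - Suc t) = t" using that by auto
      then show ?thesis by (simp add: G_def Let_def)
    qed
    show ?thesis
    proof (cases "Gd T Wd f L K (T - t) x p = \<infinity>")
      case True then show ?thesis by simp
    next
      case False
      with nm[of "T - t" x] obtain r where r: "Gd T Wd f L K (T - t) x p = ereal r" by (cases "Gd T Wd f L K (T - t) x p") auto
      then have "(INF u. G t x u) < ereal r + ereal \<epsilon>" using eq \<epsilon> by simp
      then obtain u where "G t x u < ereal r + ereal \<epsilon>" by (auto simp: INF_less_iff)
      then show ?thesis using r by (intro exI[of _ u]) simp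
    qed
  qed
  define \<phi> where "\<phi> t x = (SOME u. G t x u \<le> Gd T Wd f L K (T - t) x p + ereal \<epsilon>)" for t x
  have \<phi>: "G t x (\<phi> t x) \<le> Gd T Wd f L K (T - t) x p + ereal \<epsilon>" if "t < T" for t x
    unfolding \<phi>_def by (rule someI_ex[OF ex[OF that]])
  define pol where "pol t h = \<phi> t (fbtraj f x0 \<phi> h t)" for t h
  have trj: "traj f x0 pol h t = fbtraj f x0 \<phi> h t" for h t
    unfolding pol_def by (rule traj_fb)
  have claim: "m \<le> T \<Longrightarrow> length h = T - m \<Longrightarrow>
      Qr T Wd f L K x0 pol p m h \<le> Gd T Wd f L K m (traj f x0 pol h (T - m)) p + ereal (real m * \<epsilon>)" for m h
  proof (induct m arbitrary: h)
    case 0 then show ?case by simp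
  next
    case (Suc m)
    define t where "t = T - Suc m"
    have tm: "T - m = Suc t" "T - t = Suc m" "T - Suc t = m" "t < T" using Suc(2) by (auto simp: t_def)
    have lh: "length h = t" using Suc(3) by (simp add: t_def)
    define x where "x = traj f x0 pol h t"
    define u where "u = pol t (take t h)"
    have ux: "u = \<phi> t x"
      unfolding u_def x_def pol_def trj using fbtraj_take_eq[of t "take t h" h f x0 \<phi>] by simp
    have tr: "traj f x0 pol (h @ [w]) (T - m) = f t x u w" for w
      using lh by (simp add: tm x_def u_def traj_snoc nth_append)
    have "Qr T Wd f L K x0 pol p (Suc m) h = Efin (Wd (Suc t)) (\<lambda>w. L t x u w p + Qr T Wd f L K x0 pol p m (h @ [w]))"
      by (simp add: Let_def t_def[symmetric] x_def u_def)
    also have "\<dots> \<le> Efin (Wd (Suc t)) (\<lambda>w. L t x u w p + (Gd T Wd f L K m (f t x u w) p + ereal (real m * \<epsilon>)))"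
      using Suc(1)[of "h @ [_]"] Suc(2) lh tm tr by (intro Efin_mono add_mono order.refl) auto
    also have "\<dots> = G t x u + ereal (real m * \<epsilon>)"
      unfolding G_def tm(3) add.assoc[symmetric] by (rule Efin_add_const) (rule fin[OF tm(4)])
    also have "\<dots> \<le> Gd T Wd f L K (Suc m) x p + ereal \<epsilon> + ereal (real m * \<epsilon>)"
      using \<phi>[OF tm(4), of x] ux tm(2) by (intro add_mono order.refl) simp
    also have "\<dots> = Gd T Wd f L K (Suc m) x p + ereal (real (Suc m) * \<epsilon>)"
      by (simp only: add.assoc plus_ereal.simps) (simp add: algebra_simps)
    finally show ?case by (simp add: t_def[symmetric] x_def)
  qed
  have "Phi T Wd f L K x0 p \<le> Efin (hist Wd T) (\<lambda>h. (\<Sum>t<T. L t (traj f x0 pol h t) (pol t (take t h)) (h ! t) p) + K (traj f x0 pol h T) p)"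
    unfolding Phi_def by (rule INF_lower) simp
  also have "\<dots> = Qr T Wd f L K x0 pol p T []" by (rule cost_eq_Qr[where T=T and Wd=Wd, OF fin])
  also have "\<dots> \<le> Gd T Wd f L K T x0 p + ereal (real T * \<epsilon>)"
    using claim[of T "[]"] by simp
  also have "\<dots> \<le> Gd T Wd f L K T x0 p + ereal e"
  proof -
    have "real T * \<epsilon> \<le> e" using e by (simp add: \<epsilon>_def field_simps)
    then show ?thesis by (intro add_mono) simp_all
  qed
  finally show "Phi T Wd f L K x0 p \<le> Gd T Wd f L K T x0 p + ereal e" .
qed

lemma lsc_seq:
  fixes g :: "'a::topological_space \<Rightarrow> ereal"
  assumes lsc: "lsc_ereal g" and s: "s \<longlonglongrightarrow> z"
  shows "g z \<le> liminf (\<lambda>k. g (s k))"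
proof (unfold le_Liminf_iff, intro allI impI)
  fix y assume y: "y < g z"
  have "g z \<le> Liminf (at z) g" using lsc by (simp add: lsc_ereal_def)
  with y have "eventually (\<lambda>a. y < g a) (at z)" by (simp add: le_Liminf_iff)
  then obtain U where U: "open U" "z \<in> U" "\<And>a. a \<in> U \<Longrightarrow> a \<noteq> z \<Longrightarrow> y < g a"
    unfolding eventually_at_topological by blast
  have "eventually (\<lambda>k. s k \<in> U) sequentially" using s U(1,2) by (rule topological_tendstoD)
  then show "eventually (\<lambda>k. y < g (s k)) sequentially"
    by eventually_elim (use U(3) y in fastforce)
qed

lemma lsc_bdd_below:
  fixes g :: "'a::metric_space \<Rightarrow> ereal"
  assumes lsc: "lsc_ereal g" and nm: "\<And>z. g z \<noteq> -\<infinity>" and S: "compact S"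
  shows "\<exists>B::real. \<forall>z\<in>S. ereal B \<le> g z"
proof (rule ccontr)
  assume "\<not> ?thesis"
  then have "\<forall>k::nat. \<exists>z\<in>S. g z < ereal (- real k)" by (auto simp: not_le)
  then obtain zs where zs: "\<And>k. zs k \<in> S" "\<And>k. g (zs k) < ereal (- real k)" by metis
  obtain z r where z: "z \<in> S" "strict_mono r" "(zs \<circ> r) \<longlonglongrightarrow> z"
    using compact_imp_seq_compact[OF S] zs(1) unfolding seq_compact_def by metis
  have le: "g z \<le> liminf (\<lambda>k. g ((zs \<circ> r) k))" by (rule lsc_seq[OF lsc z(3)])
  obtain y :: real where y: "ereal y < g z"
  proof (cases "g z")
    case (real r) then show ?thesis by (intro that[of "r - 1"]) simp
  next
    case PInf then show ?thesis by (intro that[of 0]) simp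
  next
    case MInf with nm show ?thesis by simp
  qed
  with le have "eventually (\<lambda>k. ereal y < g ((zs \<circ> r) k)) sequentially"
    by (simp add: le_Liminf_iff del: comp_apply)
  moreover have "eventually (\<lambda>k. g ((zs \<circ> r) k) \<le> ereal y) sequentially"
  proof -
    obtain N :: nat where N: "- y \<le> real N" using real_arch_simple by blast
    show ?thesis unfolding eventually_sequentially
    proof (intro exI[of _ N] allI impI)
      fix k assume "N \<le> k"
      then have "real N \<le> real (r k)" using seq_suble[OF z(2), of k] by linarith
      then have "ereal (- real (r k)) \<le> ereal y" using N by simp
      then show "g ((zs \<circ> r) k) \<le> ereal y" using zs(2)[of "r k"] by (simp del: ereal_less_eq)
    qed
  qed
  ultimately have "eventually (\<lambda>k. False) sequentially" by eventually_elim auto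
  then show False by simp
qed

lemma finite_uniform_bound:
  assumes "finite A" "\<And>a. a \<in> A \<Longrightarrow> \<exists>B::real. \<forall>B'\<le>B. P a B'"
  shows "\<exists>B::real. \<forall>a\<in>A. P a B"
  using assms
proof (induct A rule: finite_induct)
  case empty then show ?case by simp
next
  case (insert x F)
  obtain B1 where B1: "\<forall>a\<in>F. P a B1" using insert by blast
  obtain B2 where B2: "\<forall>B'\<le>B2. P x B'" using insert by blast
  have "\<forall>a\<in>F. \<exists>B. \<forall>B'\<le>B. P a B'" using insert by blast
  then obtain Bs where Bs: "\<And>a. a \<in> F \<Longrightarrow> \<forall>B'\<le>Bs a. P a B'" by metis
  define B where "B = min B2 (Min (insert 0 (Bs ` F)))"
  have "\<forall>a\<in>insert x F. P a B"
  proof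
    fix a assume "a \<in> insert x F"
    then show "P a B"
    proof
      assume "a = x" then show ?thesis using B2 by (simp add: B_def)
    next
      assume a: "a \<in> F"
      have "Min (insert 0 (Bs ` F)) \<le> Bs a" using a insert(1) by (intro Min_le) auto
      then show ?thesis using Bs[OF a] by (simp add: B_def)
    qed
  qed
  then show ?case by blast
qed

lemma liminf_add_bdd:
  fixes a b :: "nat \<Rightarrow> ereal"
  assumes "\<And>k. ereal A \<le> a k" "\<And>k. ereal B \<le> b k"
  shows "liminf a + liminf b \<le> liminf (\<lambda>k. a k + b k)"
proof (rule ereal_liminf_add_mono)
  have "ereal A \<le> liminf a" using assms(1) by (intro Liminf_bounded) auto
  moreover have "ereal B \<le> liminf b" using assms(2) by (intro Liminf_bounded) auto
  ultimately show "\<not> ((liminf a = \<infinity> \<and> liminf b = -\<infinity>) \<or> (liminf a = -\<infinity> \<and> liminf b = \<infinity>))"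
    by auto
qed

lemma liminf_sum_bdd:
  fixes a :: "nat \<Rightarrow> 'i \<Rightarrow> ereal"
  assumes "finite A" "\<And>i k. i \<in> A \<Longrightarrow> ereal (b i) \<le> a k i"
  shows "(\<Sum>i\<in>A. liminf (\<lambda>k. a k i)) \<le> liminf (\<lambda>k. \<Sum>i\<in>A. a k i)"
  using assms
proof (induct A rule: finite_induct)
  case empty then show ?case by (simp add: Liminf_const)
next
  case (insert x F)
  have "(\<Sum>i\<in>insert x F. liminf (\<lambda>k. a k i)) = liminf (\<lambda>k. a k x) + (\<Sum>i\<in>F. liminf (\<lambda>k. a k i))"
    using insert by simp
  also have "\<dots> \<le> liminf (\<lambda>k. a k x) + liminf (\<lambda>k. \<Sum>i\<in>F. a k i)"
    using insert by (intro add_mono order.refl) auto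
  also have "\<dots> \<le> liminf (\<lambda>k. a k x + (\<Sum>i\<in>F. a k i))"
  proof (rule liminf_add_bdd)
    show "ereal (b x) \<le> a k x" for k using insert by auto
    have "(\<Sum>i\<in>F. ereal (b i)) \<le> (\<Sum>i\<in>F. a k i)" for k using insert by (intro sum_mono) auto
    then show "ereal (\<Sum>i\<in>F. b i) \<le> (\<Sum>i\<in>F. a k i)" for k by simp
  qed
  also have "\<dots> = liminf (\<lambda>k. \<Sum>i\<in>insert x F. a k i)" using insert by simp
  finally show ?case .
qed

lemma Efin_liminf:
  assumes fin: "finite (set_pmf q)" and bdd: "\<And>w k. w \<in> set_pmf q \<Longrightarrow> ereal (b w) \<le> a k w"
  shows "Efin q (\<lambda>w. liminf (\<lambda>k. a k w)) \<le> liminf (\<lambda>k. Efin q (a k))"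
proof -
  have "Efin q (\<lambda>w. liminf (\<lambda>k. a k w)) = (\<Sum>w\<in>set_pmf q. liminf (\<lambda>k. ereal (pmf q w) * a k w))"
    unfolding Efin_def by (intro sum.cong refl) (simp add: Liminf_ereal_mult_left)
  also have "\<dots> \<le> liminf (\<lambda>k. Efin q (a k))"
    unfolding Efin_def
  proof (rule liminf_sum_bdd[OF fin])
    fix w k assume "w \<in> set_pmf q"
    then show "ereal (pmf q w * b w) \<le> ereal (pmf q w) * a k w"
      using bdd by (simp add: ereal_mult_left_mono times_ereal.simps(1)[symmetric] del: times_ereal.simps)
  qed
  finally show ?thesis .
qed

lemma moreau_lower:
  assumes "\<And>q. ereal B \<le> g q" "0 < \<mu>"
  shows "ereal B \<le> moreau \<mu> g p"
  unfolding moreau_def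
proof (rule INF_greatest)
  fix q
  have "0 \<le> ereal ((norm (p - q))\<^sup>2 / (2 * \<mu>))" using assms(2) by simp
  then show "ereal B \<le> g q + ereal ((norm (p - q))\<^sup>2 / (2 * \<mu>))"
    using assms(1)[of q] by (metis add_increasing2)
qed

lemma moreau_infty:
  assumes "\<And>q. g q = \<infinity>"
  shows "moreau \<mu> g p = \<infinity>"
  unfolding moreau_def using assms by simp

lemma moreau_gliminf:
  fixes g :: "'z::metric_space \<Rightarrow> 'p::euclidean_space \<Rightarrow> ereal"
  assumes lsc: "lsc_ereal (\<lambda>(z,p). g z p)"
    and bdd: "\<And>k q. ereal B \<le> g (zs k) q"
    and zs: "zs \<longlonglongrightarrow> z" and ps: "ps \<longlonglongrightarrow> p" and mu: "\<mu>s \<longlonglongrightarrow> 0" and mupos: "\<And>k. 0 < \<mu>s k"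
  shows "g z p \<le> liminf (\<lambda>k. moreau (\<mu>s k) (g (zs k)) (ps k))"
proof -
  define m where "m k = moreau (\<mu>s k) (g (zs k)) (ps k)" for k
  define pen where "pen k q = (norm (ps k - q))\<^sup>2 / (2 * \<mu>s k)" for k q
  have pen0: "0 \<le> pen k q" for k q using mupos[of k] by (simp add: pen_def)
  have mB: "ereal B \<le> m k" for k unfolding m_def by (rule moreau_lower[OF bdd mupos])
  have "ereal B \<le> liminf m" by (rule Liminf_bounded) (simp add: mB)
  show ?thesis
  proof (cases "liminf m = \<infinity>")
    case True then show ?thesis by (simp add: m_def[symmetric])
  next
    case False
    with \<open>ereal B \<le> liminf m\<close> obtain c where c: "liminf m = ereal c" "B \<le> c"
      by (cases "liminf m") auto
    obtain r where r: "strict_mono r" "(m \<circ> r) \<longlonglongrightarrow> ereal c"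
      using liminf_subseq_lim[of m] c by auto
    have ev: "eventually (\<lambda>k. m (r k) < ereal (c + 1)) sequentially"
      using order_tendstoD(2)[OF r(2), of "ereal (c + 1)"] by simp
    define \<delta> where "\<delta> k = inverse (real (Suc k))" for k
    have \<delta>pos: "0 < \<delta> k" "\<delta> k \<le> 1" for k by (auto simp: \<delta>_def field_simps)
    have "\<exists>q. m k < \<infinity> \<longrightarrow> g (zs k) q + ereal (pen k q) < m k + ereal (\<delta> k)" for k
    proof (cases "m k < \<infinity>")
      case True
      with mB[of k] obtain v where v: "m k = ereal v" by (cases "m k") auto
      then have "(INF q. g (zs k) q + ereal (pen k q)) < m k + ereal (\<delta> k)"
        using \<delta>pos[of k] by (simp add: m_def moreau_def pen_def)
      then show ?thesis by (auto simp: INF_less_iff)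
    qed simp
    then obtain qs where qs: "\<And>k. m k < \<infinity> \<Longrightarrow> g (zs k) (qs k) + ereal (pen k (qs k)) < m k + ereal (\<delta> k)"
      by metis
    define D where "D = c + 2 - B"
    have ev2: "eventually (\<lambda>k. g (zs (r k)) (qs (r k)) + ereal (pen (r k) (qs (r k))) < m (r k) + ereal (\<delta> (r k))
                  \<and> pen (r k) (qs (r k)) \<le> D) sequentially"
      using ev
    proof eventually_elim
      case (elim k)
      then have lt: "g (zs (r k)) (qs (r k)) + ereal (pen (r k) (qs (r k))) < m (r k) + ereal (\<delta> (r k))"
        by (intro qs) auto
      have "ereal B + ereal (pen (r k) (qs (r k))) \<le> g (zs (r k)) (qs (r k)) + ereal (pen (r k) (qs (r k)))"
        using bdd by (intro add_mono) auto
      also note lt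
      also have "m (r k) + ereal (\<delta> (r k)) \<le> ereal (c + 1) + ereal 1"
        using elim \<delta>pos[of "r k"] by (intro add_mono) auto
      finally have "B + pen (r k) (qs (r k)) < c + 2" by simp
      then show ?case using lt by (simp add: D_def)
    qed
    have qconv: "(qs \<circ> r) \<longlonglongrightarrow> p"
    proof -
      have "(\<lambda>k. sqrt (2 * \<mu>s (r k) * D)) \<longlonglongrightarrow> sqrt (2 * 0 * D)"
        using LIMSEQ_subseq_LIMSEQ[OF mu r(1)]
        by (intro tendsto_intros) (simp add: comp_def)
      then have lim0: "(\<lambda>k. sqrt (2 * \<mu>s (r k) * D)) \<longlonglongrightarrow> 0" by simp
      have "eventually (\<lambda>k. norm (qs (r k) - ps (r k)) \<le> sqrt (2 * \<mu>s (r k) * D)) sequentially"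
        using ev2
      proof eventually_elim
        case (elim k)
        then have "(norm (ps (r k) - qs (r k)))\<^sup>2 \<le> D * (2 * \<mu>s (r k))"
          using mupos[of "r k"] by (simp add: pen_def divide_le_eq)
        then have "(norm (qs (r k) - ps (r k)))\<^sup>2 \<le> 2 * \<mu>s (r k) * D"
          by (simp add: norm_minus_commute mult.commute mult.left_commute)
        then show ?case by (simp add: real_le_rsqrt)
      qed
      then have "(\<lambda>k. qs (r k) - ps (r k)) \<longlonglongrightarrow> 0" using lim0 by (rule Lim_null_comparison)
      moreover have "(\<lambda>k. ps (r k)) \<longlonglongrightarrow> p" using LIMSEQ_subseq_LIMSEQ[OF ps r(1)] by (simp add: comp_def)
      ultimately have "(\<lambda>k. ps (r k) + (qs (r k) - ps (r k))) \<longlonglongrightarrow> p + 0" by (intro tendsto_add)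
      then show ?thesis by (simp add: comp_def)
    qed
    have pconv: "(\<lambda>k. (zs (r k), qs (r k))) \<longlonglongrightarrow> (z, p)"
      using LIMSEQ_subseq_LIMSEQ[OF zs r(1)] qconv by (intro tendsto_Pair) (simp_all add: comp_def)
    have "g z p \<le> liminf (\<lambda>k. g (zs (r k)) (qs (r k)))"
      using lsc_seq[OF lsc pconv] by simp
    also have "\<dots> \<le> liminf (\<lambda>k. m (r k) + ereal (\<delta> (r k)))"
    proof (rule Liminf_mono)
      show "eventually (\<lambda>k. g (zs (r k)) (qs (r k)) \<le> m (r k) + ereal (\<delta> (r k))) sequentially"
        using ev2
      proof eventually_elim
        case (elim k)
        have "g (zs (r k)) (qs (r k)) \<le> g (zs (r k)) (qs (r k)) + ereal (pen (r k) (qs (r k)))"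
          using pen0 by (simp add: add_increasing2)
        then show ?case using elim by (meson order.trans less_imp_le)
      qed
    qed
    also have "\<dots> = ereal c"
    proof (rule lim_imp_Liminf)
      have "(\<lambda>k. ereal (\<delta> (r k))) \<longlonglongrightarrow> ereal 0"
        using LIMSEQ_subseq_LIMSEQ[OF LIMSEQ_inverse_real_of_nat r(1)]
        by (intro tendsto_intros) (simp add: comp_def \<delta>_def)
      then have "(\<lambda>k. m (r k) + ereal (\<delta> (r k))) \<longlonglongrightarrow> ereal c + ereal 0"
        using r(2) by (intro tendsto_add_ereal) (simp_all add: comp_def)
      then show "(\<lambda>k. m (r k) + ereal (\<delta> (r k))) \<longlonglongrightarrow> ereal c" by simp
    qed simp
    finally show ?thesis using c by (simp add: m_def[abs_def])
  qed
qed

definition lf :: "('t \<Rightarrow> 'x \<Rightarrow> 'u \<Rightarrow> 'w \<Rightarrow> 'p::euclidean_space \<Rightarrow> ereal) \<Rightarrow> real \<Rightarrow> 't \<Rightarrow> 'x \<Rightarrow> 'u \<Rightarrow> 'w \<Rightarrow> 'p \<Rightarrow> ereal" where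
  "lf L \<mu> t x u w p = (if 0 < \<mu> then moreau \<mu> (L t x u w) p else L t x u w p)"

definition kf :: "('x \<Rightarrow> 'p::euclidean_space \<Rightarrow> ereal) \<Rightarrow> real \<Rightarrow> 'x \<Rightarrow> 'p \<Rightarrow> ereal" where
  "kf K \<mu> x p = (if 0 < \<mu> then moreau \<mu> (K x) p else K x p)"

context
  fixes T :: nat and Wd :: "nat \<Rightarrow> 'w pmf"
    and f :: "nat \<Rightarrow> 'x::euclidean_space \<Rightarrow> 'u::euclidean_space \<Rightarrow> 'w \<Rightarrow> 'x"
    and L :: "nat \<Rightarrow> 'x \<Rightarrow> 'u \<Rightarrow> 'w \<Rightarrow> 'p::euclidean_space \<Rightarrow> ereal" and K :: "'x \<Rightarrow> 'p \<Rightarrow> ereal"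
    and KK :: "nat \<Rightarrow> 'w \<Rightarrow> 'u set" and PP :: "'p set"
  assumes fin: "\<And>t. t < T \<Longrightarrow> finite (set_pmf (Wd (Suc t)))"
    and fcont: "\<And>t w. t < T \<Longrightarrow> continuous_on UNIV (\<lambda>z. f t (fst z) (snd z) w)"
    and Llsc: "\<And>t w. t < T \<Longrightarrow> w \<in> set_pmf (Wd (Suc t)) \<Longrightarrow> lsc_ereal (\<lambda>(z,p). L t (fst z) (snd z) w p)"
    and Lnm: "\<And>t w x u p. t < T \<Longrightarrow> w \<in> set_pmf (Wd (Suc t)) \<Longrightarrow> L t x u w p \<noteq> -\<infinity>"
    and KKc: "\<And>t w. compact (KK t w)"
    and Ldom: "\<And>t w x u p. t < T \<Longrightarrow> w \<in> set_pmf (Wd (Suc t)) \<Longrightarrow> u \<notin> KK t w \<Longrightarrow> L t x u w p = \<infinity>"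
    and LPP: "\<And>t w x u p. t < T \<Longrightarrow> w \<in> set_pmf (Wd (Suc t)) \<Longrightarrow> p \<notin> PP \<Longrightarrow> L t x u w p = \<infinity>"
    and PPc: "compact PP"
    and Klsc: "lsc_ereal (\<lambda>(x,p). K x p)"
    and Knm: "\<And>x p. K x p \<noteq> -\<infinity>"
    and KPP: "\<And>x p. p \<notin> PP \<Longrightarrow> K x p = \<infinity>"
begin

lemma L_lb1:
  assumes t: "t < T" and w: "w \<in> set_pmf (Wd (Suc t))" and C: "compact C"
  shows "\<exists>B::real. \<forall>x\<in>C. \<forall>u p. ereal B \<le> L t x u w p"
proof -
  have "compact ((C \<times> KK t w) \<times> PP)" using C KKc PPc by (intro compact_Times)
  from lsc_bdd_below[OF Llsc[OF t w] _ this] obtain B where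
    B: "\<forall>z\<in>(C \<times> KK t w) \<times> PP. ereal B \<le> (\<lambda>(z,p). L t (fst z) (snd z) w p) z"
    using Lnm[OF t w] by auto
  show ?thesis
  proof (intro exI[of _ B] ballI allI)
    fix x u p assume x: "x \<in> C"
    show "ereal B \<le> L t x u w p"
    proof (cases "u \<in> KK t w \<and> p \<in> PP")
      case True then show ?thesis using B x by force
    next
      case False then show ?thesis using Ldom[OF t w] LPP[OF t w] by auto
    qed
  qed
qed

lemma L_lb:
  assumes t: "t < T" and C: "compact C"
  shows "\<exists>B::real. \<forall>w\<in>set_pmf (Wd (Suc t)). \<forall>x\<in>C. \<forall>u p. ereal B \<le> L t x u w p"
proof (rule finite_uniform_bound[OF fin[OF t]])
  fix w assume w: "w \<in> set_pmf (Wd (Suc t))"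
  obtain B where "\<forall>x\<in>C. \<forall>u p. ereal B \<le> L t x u w p" using L_lb1[OF t w C] by blast
  then show "\<exists>B. \<forall>B'\<le>B. \<forall>x\<in>C. \<forall>u p. ereal B' \<le> L t x u w p"
    by (intro exI[of _ B]) (meson ereal_less_eq(3) order_trans)
qed

lemma K_lb:
  assumes C: "compact C"
  shows "\<exists>B::real. \<forall>x\<in>C. \<forall>p. ereal B \<le> K x p"
proof -
  have "compact (C \<times> PP)" using C PPc by (intro compact_Times)
  from lsc_bdd_below[OF Klsc _ this] obtain B where B: "\<forall>z\<in>C \<times> PP. ereal B \<le> (\<lambda>(x,p). K x p) z"
    using Knm by auto
  show ?thesis
  proof (intro exI[of _ B] ballI allI)
    fix x p assume x: "x \<in> C"
    show "ereal B \<le> K x p"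
      using B x KPP[of p x] by (cases "p \<in> PP") auto
  qed
qed

lemma lf_lb:
  assumes "t < T" "w \<in> set_pmf (Wd (Suc t))" "\<forall>x\<in>C. \<forall>u p. ereal B \<le> L t x u w p" "x \<in> C"
  shows "ereal B \<le> lf L \<mu> t x u w p"
  using assms unfolding lf_def by (auto intro!: moreau_lower)

lemma lf_dom:
  assumes "t < T" "w \<in> set_pmf (Wd (Suc t))" "u \<notin> KK t w"
  shows "lf L \<mu> t x u w p = \<infinity>"
  using assms Ldom unfolding lf_def by (auto intro!: moreau_infty)

lemma kf_lb:
  assumes "\<forall>x\<in>C. \<forall>p. ereal B \<le> K x p" "x \<in> C"
  shows "ereal B \<le> kf K \<mu> x p"
  using assms unfolding kf_def by (auto intro!: moreau_lower)

lemma f_img_compact: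
  assumes t: "t < T" and C: "compact C" "compact U"
  shows "compact (\<Union>w\<in>set_pmf (Wd (Suc t)). (\<lambda>z. f t (fst z) (snd z) w) ` (C \<times> U))"
  using fin[OF t]
  by (intro compact_UN compact_continuous_image continuous_on_subset[OF fcont[OF t]] compact_Times C) auto

lemma Gd_lb:
  "n \<le> T \<Longrightarrow> compact C \<Longrightarrow> \<exists>B::real. \<forall>\<mu> x p. x \<in> C \<longrightarrow> ereal B \<le> Gd T Wd f (lf L \<mu>) (kf K \<mu>) n x p"
proof (induct n arbitrary: C)
  case 0
  obtain B where "\<forall>x\<in>C. \<forall>p. ereal B \<le> K x p" using K_lb[OF 0(2)] by blast
  then show ?case by (intro exI[of _ B]) (auto intro: kf_lb)
next
  case (Suc n)
  define t where "t = T - Suc n"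
  have t: "t < T" using Suc(2) by (simp add: t_def)
  obtain w0 where w0: "w0 \<in> set_pmf (Wd (Suc t))" using set_pmf_not_empty by fastforce
  define D where "D = (\<Union>w\<in>set_pmf (Wd (Suc t)). (\<lambda>z. f t (fst z) (snd z) w) ` (C \<times> KK t w0))"
  have D: "compact D" unfolding D_def by (rule f_img_compact[OF t Suc(3) KKc])
  obtain B1 where B1: "\<forall>\<mu> x p. x \<in> D \<longrightarrow> ereal B1 \<le> Gd T Wd f (lf L \<mu>) (kf K \<mu>) n x p"
    using Suc(1)[OF _ D] Suc(2) by auto
  obtain B2 where B2: "\<forall>w\<in>set_pmf (Wd (Suc t)). \<forall>x\<in>C. \<forall>u p. ereal B2 \<le> L t x u w p"
    using L_lb[OF t Suc(3)] by blast
  show ?case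
  proof (intro exI[of _ "B2 + B1"] allI impI)
    fix \<mu> x p assume x: "x \<in> C"
    show "ereal (B2 + B1) \<le> Gd T Wd f (lf L \<mu>) (kf K \<mu>) (Suc n) x p"
      unfolding Gd.simps Let_def t_def[symmetric]
    proof (rule INF_greatest)
      fix u
      show "ereal (B2 + B1) \<le> Efin (Wd (Suc t)) (\<lambda>w. lf L \<mu> t x u w p + Gd T Wd f (lf L \<mu>) (kf K \<mu>) n (f t x u w) p)"
      proof (cases "u \<in> KK t w0")
        case False
        have "Efin (Wd (Suc t)) (\<lambda>w. lf L \<mu> t x u w p + Gd T Wd f (lf L \<mu>) (kf K \<mu>) n (f t x u w) p) = \<infinity>"
          using lf_dom[OF t w0 False] by (intro Efin_infty[OF fin[OF t] w0]) simp
        then show ?thesis by simp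
      next
        case True
        show ?thesis
        proof (rule Efin_lower[OF fin[OF t]])
          fix w assume w: "w \<in> set_pmf (Wd (Suc t))"
          have "f t x u w \<in> D" unfolding D_def using w x True by force
          then have "ereal B1 \<le> Gd T Wd f (lf L \<mu>) (kf K \<mu>) n (f t x u w) p" using B1 by blast
          moreover have "ereal B2 \<le> lf L \<mu> t x u w p" using lf_lb[OF t w _ x] B2 w by blast
          ultimately show "ereal (B2 + B1) \<le> lf L \<mu> t x u w p + Gd T Wd f (lf L \<mu>) (kf K \<mu>) n (f t x u w) p"
            using add_mono by fastforce
        qed
      qed
    qed
  qed
qed

lemma seq_lim_compact: "xs \<longlonglongrightarrow> (x::'a::heine_borel) \<Longrightarrow> compact (insert x (range xs))"
  by (rule compact_sequence_with_limit)

lemma gl: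
  "n \<le> T \<Longrightarrow> xs \<longlonglongrightarrow> x \<Longrightarrow> ps \<longlonglongrightarrow> p \<Longrightarrow> \<mu>s \<longlonglongrightarrow> 0 \<Longrightarrow> (\<forall>k. 0 < \<mu>s k) \<Longrightarrow>
   Gd T Wd f L K n x p \<le> liminf (\<lambda>k. Gd T Wd f (lf L (\<mu>s k)) (kf K (\<mu>s k)) n (xs k) (ps k))"
proof (induct n arbitrary: xs x ps p \<mu>s)
  case 0
  obtain B where B: "\<forall>x'\<in>insert x (range xs). \<forall>p. ereal B \<le> K x' p"
    using K_lb[OF seq_lim_compact[OF 0(2)]] by blast
  have "K x p \<le> liminf (\<lambda>k. moreau (\<mu>s k) (K (xs k)) (ps k))"
    by (rule moreau_gliminf[where B=B]) (use 0 B Klsc in auto)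
  then show ?case using 0(5) by (simp add: kf_def)
next
  case (Suc n)
  note xs = Suc(3) and ps = Suc(4) and mu = Suc(5) and mupos = Suc(6)
  define t where "t = T - Suc n"
  have t: "t < T" using Suc(2) by (simp add: t_def)
  define C0 where "C0 = insert x (range xs)"
  have C0: "compact C0" unfolding C0_def by (rule seq_lim_compact[OF xs])
  define V where "V k = Gd T Wd f (lf L (\<mu>s k)) (kf K (\<mu>s k)) (Suc n) (xs k) (ps k)" for k
  define H where "H k u = Efin (Wd (Suc t)) (\<lambda>w. lf L (\<mu>s k) t (xs k) u w (ps k) + Gd T Wd f (lf L (\<mu>s k)) (kf K (\<mu>s k)) n (f t (xs k) u w) (ps k))" for k u
  have VH: "V k = (INF u. H k u)" for k by (simp add: V_def H_def Let_def t_def)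
  obtain BV where BV: "\<And>k. ereal BV \<le> V k"
    using Gd_lb[OF Suc(2) C0] unfolding V_def C0_def by blast
  have "ereal BV \<le> liminf V" by (rule Liminf_bounded) (simp add: BV)
  show ?case
  proof (cases "liminf V = \<infinity>")
    case True then show ?thesis by (simp add: V_def[abs_def])
  next
    case False
    with \<open>ereal BV \<le> liminf V\<close> obtain c where c: "liminf V = ereal c"
      by (cases "liminf V") auto
    obtain r where r: "strict_mono r" "(V \<circ> r) \<longlonglongrightarrow> ereal c"
      using liminf_subseq_lim[of V] c by auto
    define \<delta> where "\<delta> k = inverse (real (Suc k))" for k
    have \<delta>pos: "0 < \<delta> k" "\<delta> k \<le> 1" for k by (auto simp: \<delta>_def field_simps)
    have "\<exists>u. V k < \<infinity> \<longrightarrow> H k u < V k + ereal (\<delta> k)" for k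
    proof (cases "V k < \<infinity>")
      case True
      with BV[of k] obtain v where v: "V k = ereal v" by (cases "V k") auto
      then have "(INF u. H k u) < V k + ereal (\<delta> k)" using \<delta>pos[of k] VH[of k] by simp
      then show ?thesis by (auto simp: INF_less_iff)
    qed simp
    then obtain us where us: "\<And>k. V k < \<infinity> \<Longrightarrow> H k (us k) < V k + ereal (\<delta> k)" by metis
    obtain w0 where w0: "w0 \<in> set_pmf (Wd (Suc t))" using set_pmf_not_empty by fastforce
    have "eventually (\<lambda>k. V (r k) < ereal (c + 1)) sequentially"
      using order_tendstoD(2)[OF r(2), of "ereal (c + 1)"] by simp
    then obtain N where N: "\<And>k. N \<le> k \<Longrightarrow> V (r k) < ereal (c + 1)" unfolding eventually_sequentially by blast
    have Hlt: "H (r (k + N)) (us (r (k + N))) < V (r (k + N)) + ereal (\<delta> (r (k + N)))" for k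
      using N[of "k + N"] by (intro us) auto
    have uK: "us (r (k + N)) \<in> KK t w0" for k
    proof (rule ccontr)
      assume "us (r (k + N)) \<notin> KK t w0"
      then have "H (r (k + N)) (us (r (k + N))) = \<infinity>"
        unfolding H_def using lf_dom[OF t w0] by (intro Efin_infty[OF fin[OF t] w0]) simp
      then show False using Hlt[of k] by simp
    qed
    obtain u s where us_conv: "u \<in> KK t w0" "strict_mono s" "((\<lambda>k. us (r (k + N))) \<circ> s) \<longlonglongrightarrow> u"
      using compact_imp_seq_compact[OF KKc[of t w0]] uK unfolding seq_compact_def by metis
    define \<rho> where "\<rho> k = r (s k + N)" for k
    have \<rho>: "strict_mono \<rho>"
    proof -
      have "strict_mono (\<lambda>k. s k + N)" using us_conv(2) by (simp add: strict_mono_def)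
      then show ?thesis unfolding \<rho>_def using strict_mono_o[OF r(1)] by (simp add: comp_def)
    qed
    have sub: "X \<longlonglongrightarrow> a \<Longrightarrow> (\<lambda>k. X (\<rho> k)) \<longlonglongrightarrow> a" for X and a :: "'b::topological_space"
      using LIMSEQ_subseq_LIMSEQ[OF _ \<rho>] by (simp add: comp_def)
    have uconv: "(\<lambda>k. us (\<rho> k)) \<longlonglongrightarrow> u" using us_conv(3) by (simp add: \<rho>_def comp_def)
    have Vconv: "(\<lambda>k. V (\<rho> k)) \<longlonglongrightarrow> ereal c"
    proof -
      have "strict_mono (\<lambda>k. s k + N)" using us_conv(2) by (simp add: strict_mono_def)
      from LIMSEQ_subseq_LIMSEQ[OF r(2) this] show ?thesis by (simp add: \<rho>_def comp_def)
    qed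
    have Hlt\<rho>: "H (\<rho> k) (us (\<rho> k)) < V (\<rho> k) + ereal (\<delta> (\<rho> k))" for k
      unfolding \<rho>_def by (rule Hlt)
    have xs\<rho>: "(\<lambda>k. xs (\<rho> k)) \<longlonglongrightarrow> x" and ps\<rho>: "(\<lambda>k. ps (\<rho> k)) \<longlonglongrightarrow> p"
      and mu\<rho>: "(\<lambda>k. \<mu>s (\<rho> k)) \<longlonglongrightarrow> 0" using sub xs ps mu by auto
    have xu\<rho>: "(\<lambda>k. (xs (\<rho> k), us (\<rho> k))) \<longlonglongrightarrow> (x, u)" using xs\<rho> uconv by (rule tendsto_Pair)
    obtain BL where BL: "\<forall>w\<in>set_pmf (Wd (Suc t)). \<forall>x'\<in>C0. \<forall>u p. ereal BL \<le> L t x' u w p"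
      using L_lb[OF t C0] by blast
    define a1 where "a1 k w = lf L (\<mu>s (\<rho> k)) t (xs (\<rho> k)) (us (\<rho> k)) w (ps (\<rho> k))" for k w
    define a2 where "a2 k w = Gd T Wd f (lf L (\<mu>s (\<rho> k))) (kf K (\<mu>s (\<rho> k))) n (f t (xs (\<rho> k)) (us (\<rho> k)) w) (ps (\<rho> k))" for k w
    have a1lb: "ereal BL \<le> a1 k w" if w: "w \<in> set_pmf (Wd (Suc t))" for k w
      unfolding a1_def using BL w by (intro lf_lb[OF t w, of C0]) (auto simp: C0_def)
    have fconv: "(\<lambda>k. f t (xs (\<rho> k)) (us (\<rho> k)) w) \<longlonglongrightarrow> f t x u w" for w
    proof -
      have "isCont (\<lambda>z. f t (fst z) (snd z) w) (x, u)"
        using fcont[OF t] by (simp add: continuous_on_eq_continuous_at)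
      from isCont_tendsto_compose[OF this xu\<rho>] show ?thesis by simp
    qed
    have "\<forall>w\<in>set_pmf (Wd (Suc t)). \<exists>b::real. \<forall>k. ereal b \<le> a2 k w"
    proof
      fix w assume w: "w \<in> set_pmf (Wd (Suc t))"
      obtain B where "\<forall>\<mu> x' p. x' \<in> insert (f t x u w) (range (\<lambda>k. f t (xs (\<rho> k)) (us (\<rho> k)) w)) \<longrightarrow>
          ereal B \<le> Gd T Wd f (lf L \<mu>) (kf K \<mu>) n x' p"
        using Gd_lb[of n, OF _ seq_lim_compact[OF fconv[of w]]] Suc(2) by (meson Suc_leD)
      then show "\<exists>b::real. \<forall>k. ereal b \<le> a2 k w" unfolding a2_def by blast
    qed
    then obtain b2 where b2: "\<And>w k. w \<in> set_pmf (Wd (Suc t)) \<Longrightarrow> ereal (b2 w) \<le> a2 k w" by metis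
    have "Gd T Wd f L K (Suc n) x p \<le> Efin (Wd (Suc t)) (\<lambda>w. L t x u w p + Gd T Wd f L K n (f t x u w) p)"
      unfolding Gd.simps Let_def t_def[symmetric] by (rule INF_lower) simp
    also have "\<dots> \<le> Efin (Wd (Suc t)) (\<lambda>w. liminf (\<lambda>k. a1 k w) + liminf (\<lambda>k. a2 k w))"
    proof (rule Efin_mono, rule add_mono)
      fix w assume w: "w \<in> set_pmf (Wd (Suc t))"
      have "L t x u w p \<le> liminf (\<lambda>k. moreau (\<mu>s (\<rho> k)) ((\<lambda>z p. L t (fst z) (snd z) w p) (xs (\<rho> k), us (\<rho> k))) (ps (\<rho> k)))"
        using moreau_gliminf[where g="\<lambda>z p. L t (fst z) (snd z) w p" and B=BL, OF _ _ xu\<rho> ps\<rho> mu\<rho>]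
          Llsc[OF t w] BL w mupos by (auto simp: C0_def)
      then show "L t x u w p \<le> liminf (\<lambda>k. a1 k w)"
        using mupos by (simp add: a1_def lf_def)
      show "Gd T Wd f L K n (f t x u w) p \<le> liminf (\<lambda>k. a2 k w)"
        unfolding a2_def using Suc(1)[OF _ fconv ps\<rho> mu\<rho>] Suc(2) mupos by auto
    qed
    also have "\<dots> \<le> Efin (Wd (Suc t)) (\<lambda>w. liminf (\<lambda>k. a1 k w + a2 k w))"
      by (rule Efin_mono, rule liminf_add_bdd) (use a1lb b2 in auto)
    also have "\<dots> \<le> liminf (\<lambda>k. Efin (Wd (Suc t)) (\<lambda>w. a1 k w + a2 k w))"
      by (rule Efin_liminf[OF fin[OF t], where b="\<lambda>w. BL + b2 w"]) (use a1lb b2 add_mono in fastforce)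
    also have "\<dots> \<le> liminf (\<lambda>k. V (\<rho> k) + ereal (\<delta> (\<rho> k)))"
    proof (rule Liminf_mono, rule always_eventually, rule allI)
      fix k
      have "Efin (Wd (Suc t)) (\<lambda>w. a1 k w + a2 k w) = H (\<rho> k) (us (\<rho> k))"
        by (simp add: a1_def a2_def H_def)
      then show "Efin (Wd (Suc t)) (\<lambda>w. a1 k w + a2 k w) \<le> V (\<rho> k) + ereal (\<delta> (\<rho> k))"
        using Hlt\<rho>[of k] by simp
    qed
    also have "\<dots> = ereal c"
    proof (rule lim_imp_Liminf)
      have "(\<lambda>k. ereal (\<delta> (\<rho> k))) \<longlonglongrightarrow> ereal 0"
        using sub[OF LIMSEQ_inverse_real_of_nat] by (intro tendsto_intros) (simp add: \<delta>_def)
      then have "(\<lambda>k. V (\<rho> k) + ereal (\<delta> (\<rho> k))) \<longlonglongrightarrow> ereal c + ereal 0"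
        using Vconv by (intro tendsto_add_ereal) simp_all
      then show "(\<lambda>k. V (\<rho> k) + ereal (\<delta> (\<rho> k))) \<longlonglongrightarrow> ereal c" by simp
    qed simp
    finally show ?thesis using c by (simp add: V_def[abs_def])
  qed
qed

end

lemma moreau_antimono:
  assumes "0 < \<mu>'" "\<mu>' \<le> \<mu>"
  shows "moreau \<mu> g p \<le> moreau \<mu>' g p"
  unfolding moreau_def
proof (rule INF_mono')
  fix q
  have "(norm (p - q))\<^sup>2 / (2 * \<mu>) \<le> (norm (p - q))\<^sup>2 / (2 * \<mu>')"
    using assms by (intro divide_left_mono) auto
  then show "g q + ereal ((norm (p - q))\<^sup>2 / (2 * \<mu>)) \<le> g q + ereal ((norm (p - q))\<^sup>2 / (2 * \<mu>'))"
    by (intro add_mono) auto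
qed

lemma lf0: "lf L 0 = L" by (simp add: lf_def[abs_def])
lemma kf0: "kf K 0 = K" by (simp add: kf_def[abs_def])

lemma Vlow_Gd:
  assumes "0 < \<mu>"
  shows "Vlow T Wd f L K \<mu> 0 x p = Gd T Wd f (lf L \<mu>) (kf K \<mu>) T x p"
proof -
  have "(\<lambda>t x u w. moreau \<mu> (L t x u w)) = lf L \<mu>" "(\<lambda>x. moreau \<mu> (K x)) = kf K \<mu>"
    using assms by (simp_all add: lf_def[abs_def] kf_def[abs_def])
  then show ?thesis by (simp add: Vlow_def Vrem_Gd)
qed

lemma lf_le: "lf L \<mu> t x u w p \<le> L t x u w p"
  by (simp add: lf_def moreau_le)
lemma kf_le: "kf K \<mu> x p \<le> K x p"
  by (simp add: kf_def moreau_le)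

theorem corollary1:
  fixes T :: nat
    and Wd :: "nat \<Rightarrow> 'w::euclidean_space pmf"
    and f :: "nat \<Rightarrow> 'x::euclidean_space \<Rightarrow> 'u::euclidean_space \<Rightarrow> 'w \<Rightarrow> 'x"
    and L :: "nat \<Rightarrow> 'x \<Rightarrow> 'u \<Rightarrow> 'w \<Rightarrow> 'p::euclidean_space \<Rightarrow> ereal"
    and K :: "'x \<Rightarrow> 'p \<Rightarrow> ereal"
    and x0 :: 'x
    and Pad :: "'p set"
    and \<mu> :: "nat \<Rightarrow> real"
  assumes T1: "T \<ge> 1"
    and A1: "\<And>t. t \<in> {1..T} \<Longrightarrow> finite (set_pmf (Wd t))"
    and A2i: "\<exists>p\<in>Pad. Phi T Wd f L K x0 p < \<infinity>"
    and A2ii: "\<And>t w. t < T \<Longrightarrow> affine_map (\<lambda>(x,u). f t x u w)"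
    and A2iii: "\<And>t w. t < T \<Longrightarrow> w \<in> set_pmf (Wd (Suc t)) \<Longrightarrow>
                  Gamma_K (\<lambda>(x,u) p. L t x u w p)"
    and A2iv: "Gamma K"
    and A4: "\<exists>PP. compact PP \<and>
               (\<forall>t<T. \<forall>w\<in>set_pmf (Wd (Suc t)). \<forall>x u. {p. L t x u w p < \<infinity>} \<subseteq> PP) \<and>
               (\<forall>x. {p. K x p < \<infinity>} \<subseteq> PP)"
    and Pad_compact: "compact Pad"
    and mu_pos: "\<And>n. \<mu> n > 0"
    and mu_decr: "decseq \<mu>"
    and mu_lim: "\<mu> \<longlonglongrightarrow> 0"
  shows "(\<forall>n. (INF p\<in>Pad. Vlow T Wd f L K (\<mu> n) 0 x0 p) \<le> (INF p\<in>Pad. Phi T Wd f L K x0 p))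
         \<and> (\<lambda>n. INF p\<in>Pad. Vlow T Wd f L K (\<mu> n) 0 x0 p) \<longlonglongrightarrow> (INF p\<in>Pad. Phi T Wd f L K x0 p)"

proof -
  from A4 obtain PP where PPc: "compact PP"
    and PPL: "\<forall>t<T. \<forall>w\<in>set_pmf (Wd (Suc t)). \<forall>x u. {p. L t x u w p < \<infinity>} \<subseteq> PP"
    and PPK: "\<forall>x. {p. K x p < \<infinity>} \<subseteq> PP" by blast
  have fin: "\<And>t. t < T \<Longrightarrow> finite (set_pmf (Wd (Suc t)))" using A1 by auto
  have fcont: "continuous_on UNIV (\<lambda>z. f t (fst z) (snd z) w)" if t: "t < T" for t w
  proof -
    obtain l c where l: "linear l" "\<And>z. (\<lambda>(x,u). f t x u w) z = l z + c"
      using A2ii[OF t, of w] unfolding affine_map_def by blast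
    have "(\<lambda>z. f t (fst z) (snd z) w) = (\<lambda>z. l z + c)" using l(2) by (auto simp: fun_eq_iff split_beta)
    moreover have "continuous_on UNIV (\<lambda>z. l z + c)"
      using l(1) by (intro continuous_intros linear_continuous_on linear_conv_bounded_linear[THEN iffD1])
    ultimately show ?thesis by metis
  qed
  have GK: "Gamma (\<lambda>(x,u) p. L t x u w p) \<and> (\<exists>KK. compact KK \<and> (\<forall>x p. {u. L t x u w p < \<infinity>} \<subseteq> KK))"
    if "t < T" "w \<in> set_pmf (Wd (Suc t))" for t w
    using A2iii[OF that] unfolding Gamma_K_def by simp
  have Llsc: "lsc_ereal (\<lambda>(z,p). L t (fst z) (snd z) w p)" if "t < T" "w \<in> set_pmf (Wd (Suc t))" for t w
  proof -
    have "(\<lambda>(y,p). (\<lambda>(x,u) p. L t x u w p) y p) = (\<lambda>(z,p). L t (fst z) (snd z) w p)"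
      by (auto simp: fun_eq_iff split_beta)
    then show ?thesis using GK[OF that] unfolding Gamma_def by metis
  qed
  have Lnm: "L t x u w p \<noteq> -\<infinity>" if "t < T" "w \<in> set_pmf (Wd (Suc t))" for t w x u p
    using GK[OF that] unfolding Gamma_def by (metis case_prod_conv)
  define KK where "KK t w = (if t < T \<and> w \<in> set_pmf (Wd (Suc t)) then
      SOME KK. compact KK \<and> (\<forall>x p. {u. L t x u w p < \<infinity>} \<subseteq> KK) else {})" for t w
  have KKp: "compact (KK t w) \<and> (\<forall>x p. {u. L t x u w p < \<infinity>} \<subseteq> KK t w)"
    if "t < T" "w \<in> set_pmf (Wd (Suc t))" for t w
    using someI_ex[OF GK[OF that, THEN conjunct2]] that by (simp add: KK_def)
  have KKc: "compact (KK t w)" for t w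
    using KKp[of t w] by (cases "t < T \<and> w \<in> set_pmf (Wd (Suc t))") (auto simp: KK_def)
  have Ldom: "L t x u w p = \<infinity>" if "t < T" "w \<in> set_pmf (Wd (Suc t))" "u \<notin> KK t w" for t w x u p
    using KKp[OF that(1,2)] that(3) by (auto simp: less_top)
  have LPP: "L t x u w p = \<infinity>" if "t < T" "w \<in> set_pmf (Wd (Suc t))" "p \<notin> PP" for t w x u p
  proof -
    have "p \<notin> {p. L t x u w p < \<infinity>}" using PPL that by blast
    then show ?thesis by (simp add: less_top)
  qed
  have Klsc: "lsc_ereal (\<lambda>(x,p). K x p)" and Knm: "\<And>x p. K x p \<noteq> -\<infinity>"
    using A2iv unfolding Gamma_def by auto
  have KPP: "K x p = \<infinity>" if "p \<notin> PP" for x p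
  proof -
    have "p \<notin> {p. K x p < \<infinity>}" using PPK that by blast
    then show ?thesis by (simp add: less_top)
  qed
  note ctx = fin fcont Llsc Lnm KKc Ldom LPP PPc Klsc Knm KPP
  have Gd_lb': "\<And>n C. n \<le> T \<Longrightarrow> compact C \<Longrightarrow> \<exists>B::real. \<forall>\<mu> x p. x \<in> C \<longrightarrow> ereal B \<le> Gd T Wd f (lf L \<mu>) (kf K \<mu>) n x p"
    apply (rule Gd_lb[where KK=KK and PP=PP]) using ctx apply -
    apply assumption+ done
  have gl': "\<And>n xs x ps p \<mu>s. n \<le> T \<Longrightarrow> xs \<longlonglongrightarrow> x \<Longrightarrow> ps \<longlonglongrightarrow> p \<Longrightarrow> \<mu>s \<longlonglongrightarrow> 0 \<Longrightarrow> (\<forall>k. 0 < \<mu>s k) \<Longrightarrow>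
   Gd T Wd f L K n x p \<le> liminf (\<lambda>k. Gd T Wd f (lf L (\<mu>s k)) (kf K (\<mu>s k)) n (xs k) (ps k))"
    apply (rule gl[where KK=KK and PP=PP]) using ctx apply -
    apply assumption+ done
  have nm: "Gd T Wd f L K n x p \<noteq> -\<infinity>" if nT: "n \<le> T" for n x p
  proof -
    obtain B where "\<forall>\<mu> x' p. x' \<in> {x} \<longrightarrow> ereal B \<le> Gd T Wd f (lf L \<mu>) (kf K \<mu>) n x' p"
      using Gd_lb'[OF nT compact_sing] by blast
    then have "ereal B \<le> Gd T Wd f (lf L 0) (kf K 0) n x p" by blast
    then have "ereal B \<le> Gd T Wd f L K n x p" by (simp only: lf0 kf0)
    then show ?thesis by auto
  qed
  have V_le_Phi: "Vlow T Wd f L K (\<mu> n) 0 x0 p \<le> Phi T Wd f L K x0 p" for n p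
  proof -
    have "Vlow T Wd f L K (\<mu> n) 0 x0 p = Gd T Wd f (lf L (\<mu> n)) (kf K (\<mu> n)) T x0 p"
      by (rule Vlow_Gd[OF mu_pos])
    also have "\<dots> \<le> Gd T Wd f L K T x0 p" by (intro Gd_mono lf_le kf_le)
    also have "\<dots> \<le> Phi T Wd f L K x0 p" by (rule Gd_le_Phi[where T=T and Wd=Wd, OF fin])
    finally show ?thesis .
  qed
  define a where "a n = (INF p\<in>Pad. Vlow T Wd f L K (\<mu> n) 0 x0 p)" for n
  define S where "S = (INF p\<in>Pad. Phi T Wd f L K x0 p)"
  have part1: "a n \<le> S" for n unfolding a_def S_def by (intro INF_mono') (rule V_le_Phi)
  have inc: "incseq a"
  proof (rule incseq_SucI)
    fix n
    have "\<mu> (Suc n) \<le> \<mu> n" using mu_decr by (simp add: decseq_Suc_iff)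
    then show "a n \<le> a (Suc n)" unfolding a_def
      by (intro INF_mono') (simp add: Vlow_Gd[OF mu_pos] Gd_mono lf_def kf_def mu_pos moreau_antimono)
  qed
  have lim: "a \<longlonglongrightarrow> (SUP n. a n)" by (rule LIMSEQ_SUP[OF inc])
  have "S \<le> (SUP n. a n)"
  proof (cases "(SUP n. a n) = \<infinity>")
    case True then show ?thesis by simp
  next
    case False
    obtain p0 where p0: "p0 \<in> Pad" using A2i by blast
    obtain B0 where B0: "\<forall>\<mu>' x' p. x' \<in> {x0} \<longrightarrow> ereal B0 \<le> Gd T Wd f (lf L \<mu>') (kf K \<mu>') T x' p"
      using Gd_lb'[OF order.refl compact_sing] by blast
    have "ereal B0 \<le> a 0" unfolding a_def using B0 by (auto intro!: INF_greatest simp: Vlow_Gd[OF mu_pos])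
    also have "a 0 \<le> (SUP n. a n)" by (rule SUP_upper) simp
    finally obtain c where c: "(SUP n. a n) = ereal c" using False by (cases "(SUP n. a n)") auto
    define \<delta> where "\<delta> k = inverse (real (Suc k))" for k
    have \<delta>pos: "0 < \<delta> k" for k by (auto simp: \<delta>_def)
    have "\<exists>q\<in>Pad. Vlow T Wd f L K (\<mu> n) 0 x0 q < ereal c + ereal (\<delta> n)" for n
    proof -
      have "a n \<le> ereal c" using c by (metis SUP_upper UNIV_I)
      also have "\<dots> < ereal c + ereal (\<delta> n)" using \<delta>pos[of n] by simp
      finally show ?thesis unfolding a_def by (simp add: INF_less_iff)
    qed
    then obtain ps where ps: "\<And>n. ps n \<in> Pad" "\<And>n. Vlow T Wd f L K (\<mu> n) 0 x0 (ps n) < ereal c + ereal (\<delta> n)"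
      by metis
    obtain pst r where pst: "pst \<in> Pad" "strict_mono r" "(ps \<circ> r) \<longlonglongrightarrow> pst"
      using compact_imp_seq_compact[OF Pad_compact] ps(1) unfolding seq_compact_def by metis
    have "Gd T Wd f L K T x0 pst \<le> liminf (\<lambda>k. Gd T Wd f (lf L (\<mu> (r k))) (kf K (\<mu> (r k))) T x0 (ps (r k)))"
    proof (rule gl'[OF order.refl])
      show "(\<lambda>k. x0) \<longlonglongrightarrow> x0" by simp
      show "(\<lambda>k. ps (r k)) \<longlonglongrightarrow> pst" using pst(3) by (simp add: comp_def)
      show "(\<lambda>k. \<mu> (r k)) \<longlonglongrightarrow> 0" using LIMSEQ_subseq_LIMSEQ[OF mu_lim pst(2)] by (simp add: comp_def)
      show "\<forall>k. 0 < \<mu> (r k)" using mu_pos by simp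
    qed
    also have "\<dots> \<le> liminf (\<lambda>k. ereal c + ereal (\<delta> (r k)))"
      using ps(2) by (intro Liminf_mono always_eventually allI less_imp_le) (simp add: Vlow_Gd[OF mu_pos])
    also have "\<dots> = ereal c"
    proof (rule lim_imp_Liminf)
      have "(\<lambda>k. ereal (\<delta> (r k))) \<longlonglongrightarrow> ereal 0"
        using LIMSEQ_subseq_LIMSEQ[OF LIMSEQ_inverse_real_of_nat pst(2)]
        by (intro tendsto_intros) (simp add: \<delta>_def comp_def)
      then have "(\<lambda>k. ereal c + ereal (\<delta> (r k))) \<longlonglongrightarrow> ereal c + ereal 0"
        by (intro tendsto_add_ereal) simp_all
      then show "(\<lambda>k. ereal c + ereal (\<delta> (r k))) \<longlonglongrightarrow> ereal c" by simp
    qed simp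
    finally have "Gd T Wd f L K T x0 pst \<le> ereal c" .
    moreover have "Phi T Wd f L K x0 pst \<le> Gd T Wd f L K T x0 pst"
      by (rule Phi_le_Gd[where T=T and Wd=Wd, OF fin nm])
    moreover have "S \<le> Phi T Wd f L K x0 pst" unfolding S_def using pst(1) by (rule INF_lower)
    ultimately show ?thesis using c by simp
  qed
  moreover have "(SUP n. a n) \<le> S" by (rule SUP_least) (rule part1)
  ultimately have "(SUP n. a n) = S" by simp
  with lim part1 show ?thesis unfolding a_def S_def by simp
qed

end
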